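(* Let $\Gamma$ be an elliptic graph with NN-elliptic sequence $\{B_j\}$ and cycles $C_j$, and let $\ell\in Supp_j(P_0)$ for some $-1\le j\le m-1$. Write $Z_K-E-\ell=C_j+\sum_{v\in\mathcal V(\Gamma)\setminus\mathcal V(B_{j+1})}m_vE_v$ with $m_v\in\mathbb Z_{\ge 0}$. If $m_v\ne0$, then $v$ is not adjacent to any vertex of $B_{j+1}$.
   Context: Let $\Gamma$ be a finite connected tree with vertex set $\mathcal V$, each vertex $v$ decorated by an integer $e_v$ (genera zero). $L=\mathbb Z\langle E_v\rangle$ with form $(E_v,E_v)=e_v$, $(E_v,E_w)=1$ for adjacent $v\ne w$, $0$ otherwise, assumed negative definite; $L'$ the dual lattice $\{l'\in L\otimes\mathbb Q:(l',L)\subset\mathbb Z\}$, $[l']$ the class in $L'/L$; $E_v^*$ with $(E_v^*,E_w)=-\delta_{vw}$; $\delta_v$ valency; $E=\sum E_v$; $\ge$ coordinatewise, $\prec$ strict in all coordinates, $l>0$ if $l\ge0,l\ne0$; $|l'|$ the support. $Z_K$ with $(Z_K,E_v)=e_v+2$; $\chi(l')=-(l',l'-Z_K)/2$. $\mathcal S'=\{l':(l',E_v)\le0\ \forall v\}$, $s_h=\min\{l'\in\mathcal S':[l']=h\}$; $Z_{min}(B)$ the minimal nonzero element of $\mathcal S'(B)\cap L(B)$ for a connected full subgraph $B$. $Z(\mathbf t)=\sum z(l')\mathbf t^{l'}$ the Taylor expansion at $0$ of $\prod_v(1-\mathbf t^{E_v^*})^{\delta_v-2}$; $P_0(\mathbf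 t)=\sum_{\ell\in L,\ell\not\prec0}w(\ell)\mathbf t^\ell$, $w(\ell)=z(Z_K-E-\ell)$, $Supp(P_0)=\{\ell\not\prec0:w(\ell)\ne0\}$. Elliptic graph: $e_v\le-2$ for all $v$, $\min_{l\in L,l>0}\chi(l)=0$. NN-elliptic sequence: $B_{-1}=\Gamma$, $Z_{B_{-1}}=s_{[Z_K]}$, $B_0=|Z_K-s_{[Z_K]}|$; for $j\ge0$, $Z_{B_j}=Z_{min}(B_j)$, and if $Z_K-\sum_{i=-1}^jZ_{B_i}\ne0$ then $B_{j+1}=|Z_K-\sum_{i=-1}^jZ_{B_i}|$; $m$ is the index with $Z_K=\sum_{i=-1}^mZ_{B_i}$; $C_j=\sum_{i=-1}^jZ_{B_i}$. For $\ell\in Supp(P_0)$ with $\mathcal V^{<0}(\ell)=\{v:\ell_v<0\}$, the associated cycle is the unique $l'$ with $\ell=Z_K-E-l'-\sum_{v\in\mathcal V^{<0}(\ell)}m_vE_v$, $l'\le Z_K$, $l'_v=(Z_K)_v$ on $\mathcal V^{<0}(\ell)$, $m_v\in\mathbb Z_{\ge0}$; $Supp_j(P_0)$ is the set of $\ell$ with associated cycle $C_j$ (for such $\ell$ it is known that $\mathcal V^{<0}(\ell)=\mathcal V\setminus\mathcal V(B_{j+1})$). *)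

theory Defs
  imports Complex_Main "HOL-Library.Function_Algebras"
begin

text \<open>Plumbing graph: finite vertex set V, adjacency adj, decorations e.
  Rational vectors (elements of L tensor Q) are functions 'v => rat vanishing off V.\<close>

definition is_tree :: "'v set \<Rightarrow> ('v \<Rightarrow> 'v \<Rightarrow> bool) \<Rightarrow> bool" where
  "is_tree V adj \<longleftrightarrow> finite V \<and> V \<noteq> {}
     \<and> (\<forall>u w. adj u w \<longrightarrow> u \<in> V \<and> w \<in> V \<and> u \<noteq> w \<and> adj w u)
     \<and> (\<forall>u\<in>V. \<forall>w\<in>V. adj\<^sup>*\<^sup>* u w)
     \<and> card {{u, w} | u w. adj u w} = card V - 1"

definition Ev :: "'v \<Rightarrow> 'v \<Rightarrow> rat" where
  "Ev v = (\<lambda>w. if w = v then 1 else 0)"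

definition Eall :: "'v set \<Rightarrow> 'v \<Rightarrow> rat" where
  "Eall V = (\<lambda>w. if w \<in> V then 1 else 0)"

definition valency :: "'v set \<Rightarrow> ('v \<Rightarrow> 'v \<Rightarrow> bool) \<Rightarrow> 'v \<Rightarrow> nat" where
  "valency V adj v = card {w \<in> V. adj v w}"

definition imat :: "('v \<Rightarrow> 'v \<Rightarrow> bool) \<Rightarrow> ('v \<Rightarrow> int) \<Rightarrow> 'v \<Rightarrow> 'v \<Rightarrow> rat" where
  "imat adj e v w = (if v = w then of_int (e v) else if adj v w then 1 else 0)"

definition form :: "'v set \<Rightarrow> ('v \<Rightarrow> 'v \<Rightarrow> bool) \<Rightarrow> ('v \<Rightarrow> int) \<Rightarrow> ('v \<Rightarrow> rat) \<Rightarrow> ('v \<Rightarrow> rat) \<Rightarrow> rat" where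
  "form V adj e x y = (\<Sum>v\<in>V. \<Sum>w\<in>V. x v * y w * imat adj e v w)"

definition supported :: "'v set \<Rightarrow> ('v \<Rightarrow> rat) \<Rightarrow> bool" where
  "supported V x \<longleftrightarrow> (\<forall>v. v \<notin> V \<longrightarrow> x v = 0)"

definition latL :: "'v set \<Rightarrow> ('v \<Rightarrow> rat) set" where
  "latL V = {x. supported V x \<and> (\<forall>v. x v \<in> \<int>)}"

definition neg_definite :: "'v set \<Rightarrow> ('v \<Rightarrow> 'v \<Rightarrow> bool) \<Rightarrow> ('v \<Rightarrow> int) \<Rightarrow> bool" where
  "neg_definite V adj e \<longleftrightarrow> (\<forall>x. supported V x \<and> x \<noteq> 0 \<longrightarrow> form V adj e x x < 0)"

definition latLdual :: "'v set \<Rightarrow> ('v \<Rightarrow> 'v \<Rightarrow> bool) \<Rightarrow> ('v \<Rightarrow> int) \<Rightarrow> ('v \<Rightarrow> rat) set" where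
  "latLdual V adj e = {x. supported V x \<and> (\<forall>l\<in>latL V. form V adj e x l \<in> \<int>)}"

definition Estar :: "'v set \<Rightarrow> ('v \<Rightarrow> 'v \<Rightarrow> bool) \<Rightarrow> ('v \<Rightarrow> int) \<Rightarrow> 'v \<Rightarrow> 'v \<Rightarrow> rat" where
  "Estar V adj e v = (THE x. supported V x \<and>
      (\<forall>w\<in>V. form V adj e x (Ev w) = (if v = w then -1 else 0)))"

definition ZK :: "'v set \<Rightarrow> ('v \<Rightarrow> 'v \<Rightarrow> bool) \<Rightarrow> ('v \<Rightarrow> int) \<Rightarrow> 'v \<Rightarrow> rat" where
  "ZK V adj e = (THE x. supported V x \<and> (\<forall>v\<in>V. form V adj e x (Ev v) = of_int (e v) + 2))"

definition chi :: "'v set \<Rightarrow> ('v \<Rightarrow> 'v \<Rightarrow> bool) \<Rightarrow> ('v \<Rightarrow> int) \<Rightarrow> ('v \<Rightarrow> rat) \<Rightarrow> rat" where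
  "chi V adj e l = - form V adj e l (l - ZK V adj e) / 2"

definition Sdual :: "'v set \<Rightarrow> ('v \<Rightarrow> 'v \<Rightarrow> bool) \<Rightarrow> ('v \<Rightarrow> int) \<Rightarrow> ('v \<Rightarrow> rat) set" where
  "Sdual V adj e = {x \<in> latLdual V adj e. \<forall>v\<in>V. form V adj e x (Ev v) \<le> 0}"

definition s_cls :: "'v set \<Rightarrow> ('v \<Rightarrow> 'v \<Rightarrow> bool) \<Rightarrow> ('v \<Rightarrow> int) \<Rightarrow> ('v \<Rightarrow> rat) \<Rightarrow> 'v \<Rightarrow> rat" where
  "s_cls V adj e x = (THE s. s \<in> Sdual V adj e \<and> s - x \<in> latL V \<and>
      (\<forall>y\<in>Sdual V adj e. y - x \<in> latL V \<longrightarrow> s \<le> y))"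

definition Zmin :: "'v set \<Rightarrow> ('v \<Rightarrow> 'v \<Rightarrow> bool) \<Rightarrow> ('v \<Rightarrow> int) \<Rightarrow> 'v set \<Rightarrow> 'v \<Rightarrow> rat" where
  "Zmin V adj e B = (THE z. z \<in> latL B \<and> z \<noteq> 0 \<and> (\<forall>v\<in>B. form V adj e z (Ev v) \<le> 0) \<and>
      (\<forall>y. y \<in> latL B \<and> y \<noteq> 0 \<and> (\<forall>v\<in>B. form V adj e y (Ev v) \<le> 0) \<longrightarrow> z \<le> y))"

definition supp :: "'v set \<Rightarrow> ('v \<Rightarrow> rat) \<Rightarrow> 'v set" where
  "supp V x = {v \<in> V. x v \<noteq> 0}"

definition elliptic :: "'v set \<Rightarrow> ('v \<Rightarrow> 'v \<Rightarrow> bool) \<Rightarrow> ('v \<Rightarrow> int) \<Rightarrow> bool" where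
  "elliptic V adj e \<longleftrightarrow> (\<forall>v\<in>V. e v \<le> -2) \<and>
     (\<forall>l\<in>latL V. l > 0 \<longrightarrow> chi V adj e l \<ge> 0) \<and>
     (\<exists>l\<in>latL V. l > 0 \<and> chi V adj e l = 0)"

text \<open>NN-elliptic sequence, shifted index: nnC k = C_{k-1}.\<close>
fun nnC :: "'v set \<Rightarrow> ('v \<Rightarrow> 'v \<Rightarrow> bool) \<Rightarrow> ('v \<Rightarrow> int) \<Rightarrow> nat \<Rightarrow> 'v \<Rightarrow> rat" where
  "nnC V adj e 0 = s_cls V adj e (ZK V adj e)"
| "nnC V adj e (Suc k) = nnC V adj e k + Zmin V adj e (supp V (ZK V adj e - nnC V adj e k))"

definition NN_C :: "'v set \<Rightarrow> ('v \<Rightarrow> 'v \<Rightarrow> bool) \<Rightarrow> ('v \<Rightarrow> int) \<Rightarrow> int \<Rightarrow> 'v \<Rightarrow> rat" where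
  "NN_C V adj e j = nnC V adj e (nat (j + 1))"

definition NN_B :: "'v set \<Rightarrow> ('v \<Rightarrow> 'v \<Rightarrow> bool) \<Rightarrow> ('v \<Rightarrow> int) \<Rightarrow> int \<Rightarrow> 'v set" where
  "NN_B V adj e j = (if j = -1 then V else supp V (ZK V adj e - NN_C V adj e (j - 1)))"

text \<open>Coefficient z(l') of the Taylor expansion of prod_v (1 - t^{E_v^*})^{delta_v - 2}.\<close>
definition zcoef :: "'v set \<Rightarrow> ('v \<Rightarrow> 'v \<Rightarrow> bool) \<Rightarrow> ('v \<Rightarrow> int) \<Rightarrow> ('v \<Rightarrow> rat) \<Rightarrow> rat" where
  "zcoef V adj e l =
     (\<Sum>n\<in>{n :: 'v \<Rightarrow> nat. (\<forall>v. v \<notin> V \<longrightarrow> n v = 0) \<and>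
             (\<lambda>w. \<Sum>v\<in>V. of_nat (n v) * Estar V adj e v w) = l}.
        \<Prod>v\<in>V. (-1) ^ (n v) * ((of_nat (valency V adj v) - 2) gchoose (n v)))"

definition wcoef :: "'v set \<Rightarrow> ('v \<Rightarrow> 'v \<Rightarrow> bool) \<Rightarrow> ('v \<Rightarrow> int) \<Rightarrow> ('v \<Rightarrow> rat) \<Rightarrow> rat" where
  "wcoef V adj e l = zcoef V adj e (ZK V adj e - Eall V - l)"

definition SuppP0 :: "'v set \<Rightarrow> ('v \<Rightarrow> 'v \<Rightarrow> bool) \<Rightarrow> ('v \<Rightarrow> int) \<Rightarrow> ('v \<Rightarrow> rat) set" where
  "SuppP0 V adj e = {l \<in> latL V. \<not> (\<forall>v\<in>V. l v < 0) \<and> wcoef V adj e l \<noteq> 0}"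

definition Vneg :: "'v set \<Rightarrow> ('v \<Rightarrow> rat) \<Rightarrow> 'v set" where
  "Vneg V l = {v \<in> V. l v < 0}"

definition assoc_cycle :: "'v set \<Rightarrow> ('v \<Rightarrow> 'v \<Rightarrow> bool) \<Rightarrow> ('v \<Rightarrow> int) \<Rightarrow> ('v \<Rightarrow> rat) \<Rightarrow> 'v \<Rightarrow> rat" where
  "assoc_cycle V adj e l = (THE l'. \<exists>mm :: 'v \<Rightarrow> int.
      (\<forall>v\<in>Vneg V l. mm v \<ge> 0) \<and>
      l = ZK V adj e - Eall V - l' - (\<lambda>w. if w \<in> Vneg V l then of_int (mm w) else 0) \<and>
      l' \<le> ZK V adj e \<and> (\<forall>v\<in>Vneg V l. l' v = ZK V adj e v))"

definition SuppP0_j :: "'v set \<Rightarrow> ('v \<Rightarrow> 'v \<Rightarrow> bool) \<Rightarrow> ('v \<Rightarrow> int) \<Rightarrow> int \<Rightarrow> ('v \<Rightarrow> rat) set" where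
  "SuppP0_j V adj e j = {l \<in> SuppP0 V adj e. assoc_cycle V adj e l = NN_C V adj e j}"

end

theory Submission
  imports Defs "Jordan_Normal_Form.Determinant"
begin


lemma lin_solve:
  fixes M :: "'v \<Rightarrow> 'v \<Rightarrow> rat" and b :: "'v \<Rightarrow> rat"
  assumes fin: "finite V"
    and inj: "\<And>x. (\<forall>v. v \<notin> V \<longrightarrow> x v = 0) \<Longrightarrow> (\<forall>w\<in>V. (\<Sum>v\<in>V. x v * M v w) = 0) \<Longrightarrow> \<forall>v\<in>V. x v = 0"
  shows "\<exists>x. (\<forall>v. v \<notin> V \<longrightarrow> x v = 0) \<and> (\<forall>w\<in>V. (\<Sum>v\<in>V. x v * M v w) = b w)"
proof -
  define n where "n = card V"
  obtain h where h: "bij_betw h {0..<n} V" using ex_bij_betw_nat_finite[OF fin] n_def by blast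
  define A where "A = mat n n (\<lambda>(i,j). M (h j) (h i))"
  have A: "A \<in> carrier_mat n n" unfolding A_def by simp
  have sumconv: "(\<Sum>v\<in>V. g v) = (\<Sum>j<n. g (h j))" for g :: "'v \<Rightarrow> rat"
    using sum.reindex_bij_betw[OF h, of g] by (simp add: atLeast0LessThan)
  define hi where "hi = the_inv_into {0..<n} h"
  have hi1: "v \<in> V \<Longrightarrow> hi v < n \<and> h (hi v) = v" for v
    using h unfolding hi_def bij_betw_def
    by (metis atLeastLessThan_iff f_the_inv_into_f the_inv_into_into subsetI)
  have hi2: "i < n \<Longrightarrow> hi (h i) = i" for i
    using h unfolding hi_def bij_betw_def by (simp add: the_inv_into_f_f)
  have hV: "i < n \<Longrightarrow> h i \<in> V" for i using h unfolding bij_betw_def by auto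
  have Av: "(A *\<^sub>v X) $ i = (\<Sum>j<n. X $ j * M (h j) (h i))" if "X \<in> carrier_vec n" "i < n" for X i
    using that unfolding A_def by (simp add: mult_mat_vec_def scalar_prod_def atLeast0LessThan mult.commute)
  have "det A \<noteq> 0"
  proof
    assume "det A = 0"
    then obtain X where X: "X \<in> carrier_vec n" "X \<noteq> 0\<^sub>v n" "A *\<^sub>v X = 0\<^sub>v n"
      using det_0_iff_vec_prod_zero[OF A] by blast
    define x where "x = (\<lambda>v. if v \<in> V then X $ hi v else 0)"
    have xs: "\<forall>v. v \<notin> V \<longrightarrow> x v = 0" unfolding x_def by simp
    have xh: "i < n \<Longrightarrow> x (h i) = X $ i" for i using hV hi2 unfolding x_def by simp
    have "\<forall>w\<in>V. (\<Sum>v\<in>V. x v * M v w) = 0"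
    proof
      fix w assume w: "w \<in> V"
      have "(\<Sum>v\<in>V. x v * M v w) = (\<Sum>j<n. X $ j * M (h j) (h (hi w)))"
        using sumconv xh hi1[OF w] by simp
      also have "\<dots> = (A *\<^sub>v X) $ (hi w)" using Av[OF X(1)] hi1[OF w] by simp
      also have "\<dots> = 0" using X(3) hi1[OF w] by simp
      finally show "(\<Sum>v\<in>V. x v * M v w) = 0" .
    qed
    from inj[OF xs this] have "\<forall>i<n. X $ i = 0" using xh hV by metis
    then have "X = 0\<^sub>v n" using X(1) by (intro eq_vecI) auto
    with X(2) show False by simp
  qed
  define B where "B = vec n (\<lambda>i. b (h i))"
  define X where "X = (1 / det A) \<cdot>\<^sub>v (adj_mat A *\<^sub>v B)"
  have Xc: "X \<in> carrier_vec n" unfolding X_def using adj_mat(1)[OF A] by (simp add: B_def)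
  have AX: "A *\<^sub>v X = B"
  proof -
    have "A *\<^sub>v X = (1 / det A) \<cdot>\<^sub>v (A *\<^sub>v (adj_mat A *\<^sub>v B))"
      unfolding X_def using A adj_mat(1)[OF A] by (simp add: B_def mult_mat_vec)
    also have "A *\<^sub>v (adj_mat A *\<^sub>v B) = (A * adj_mat A) *\<^sub>v B"
      using A adj_mat(1)[OF A] by (simp add: B_def)
    also have "\<dots> = det A \<cdot>\<^sub>v B" unfolding adj_mat(2)[OF A]
    proof (intro eq_vecI)
      fix i assume "i < dim_vec (det A \<cdot>\<^sub>v B)"
      then have i: "i < n" by (simp add: B_def)
      have "(\<Sum>ia = 0..<n. det A * (if ia = i then 1 else 0) * b (h ia)) = (\<Sum>ia = 0..<n. if ia = i then det A * b (h ia) else 0)"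
        by (intro sum.cong) auto
      also have "\<dots> = det A * b (h i)" using i by simp
      finally show "((det A \<cdot>\<^sub>m 1\<^sub>m n) *\<^sub>v B) $ i = (det A \<cdot>\<^sub>v B) $ i"
        using i by (simp add: B_def mult_mat_vec_def scalar_prod_def)
    qed (simp add: B_def)
    finally show ?thesis using \<open>det A \<noteq> 0\<close> by (simp add: smult_smult_assoc)
  qed
  define x where "x = (\<lambda>v. if v \<in> V then X $ hi v else 0)"
  have xh: "i < n \<Longrightarrow> x (h i) = X $ i" for i using hV hi2 unfolding x_def by simp
  show ?thesis
  proof (intro exI conjI allI impI ballI)
    fix v assume "v \<notin> V" then show "x v = 0" unfolding x_def by simp
  next
    fix w assume w: "w \<in> V"
    have "(\<Sum>v\<in>V. x v * M v w) = (\<Sum>j<n. X $ j * M (h j) (h (hi w)))"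
      using sumconv xh hi1[OF w] by simp
    also have "\<dots> = (A *\<^sub>v X) $ (hi w)" using Av[OF Xc] hi1[OF w] by simp
    also have "\<dots> = b w" using AX hi1[OF w] by (simp add: B_def)
    finally show "(\<Sum>v\<in>V. x v * M v w) = b w" .
  qed
qed

locale plumb =
  fixes V :: "'v set" and adj :: "'v \<Rightarrow> 'v \<Rightarrow> bool" and e :: "'v \<Rightarrow> int"
  assumes fin: "finite V"
    and adjV: "\<And>u w. adj u w \<Longrightarrow> u \<in> V \<and> w \<in> V \<and> u \<noteq> w \<and> adj w u"
    and conn: "\<And>u w. u \<in> V \<Longrightarrow> w \<in> V \<Longrightarrow> adj\<^sup>*\<^sup>* u w"
    and nd: "neg_definite V adj e"
begin

abbreviation F where "F \<equiv> form V adj e"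
abbreviation ip where "ip x w \<equiv> form V adj e x (Ev w)"
abbreviation M where "M \<equiv> imat adj e"

lemma imat_sym: "M v w = M w v"
  unfolding imat_def using adjV by auto

lemma imat_off: "v \<noteq> w \<Longrightarrow> M v w \<ge> 0"
  unfolding imat_def by auto

lemma imat_adj: "adj v w \<Longrightarrow> M v w = 1"
  unfolding imat_def using adjV by auto

lemma ip_eq: "w \<in> V \<Longrightarrow> ip x w = (\<Sum>v\<in>V. x v * M v w)"
proof -
  assume w: "w \<in> V"
  have "ip x w = (\<Sum>v\<in>V. \<Sum>u\<in>V. if u = w then x v * M v w else 0)"
    unfolding form_def Ev_def by (intro sum.cong refl) auto
  also have "\<dots> = (\<Sum>v\<in>V. x v * M v w)" using w fin by simp
  finally show ?thesis .
qed

lemma form_eq: "F x y = (\<Sum>w\<in>V. y w * ip x w)"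
proof -
  have "F x y = (\<Sum>w\<in>V. \<Sum>v\<in>V. y w * (x v * M v w))"
    unfolding form_def by (subst sum.swap) (simp add: algebra_simps)
  also have "\<dots> = (\<Sum>w\<in>V. y w * ip x w)"
    by (intro sum.cong refl) (simp add: ip_eq sum_distrib_left)
  finally show ?thesis .
qed

lemma form_sym: "F x y = F y x"
  unfolding form_def by (subst sum.swap) (simp add: algebra_simps imat_sym)

lemma form_add_left: "F (x + y) z = F x z + F y z"
  unfolding form_def by (simp add: algebra_simps sum.distrib)

lemma form_diff_left: "F (x - y) z = F x z - F y z"
  unfolding form_def by (simp add: algebra_simps sum_subtractf)

lemma form_uminus_left: "F (- x) z = - F x z"
  unfolding form_def by (simp add: sum_negf)

lemma form_add_right: "F z (x + y) = F z x + F z y"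
  using form_add_left form_sym by metis

lemma form_diff_right: "F z (x - y) = F z x - F z y"
  using form_diff_left form_sym by metis

lemma form_uminus_right: "F z (- x) = - F z x"
  using form_uminus_left form_sym by metis

lemma form_zero_left: "F 0 z = 0" unfolding form_def by simp
lemma form_zero_right: "F z 0 = 0" unfolding form_def by simp

lemma form_sum_left: "F (\<lambda>w. \<Sum>v\<in>A. c v * f v w) z = (\<Sum>v\<in>A. c v * F (f v) z)"
  unfolding form_def
  by (simp add: sum_distrib_left sum_distrib_right algebra_simps sum.swap[of _ A])

lemma negdef_zero: "supported V x \<Longrightarrow> F x x \<ge> 0 \<Longrightarrow> x = 0"
  using nd unfolding neg_definite_def by force

lemma sol_unique:
  assumes "supported V x" "supported V y" "\<forall>w\<in>V. ip x w = ip y w"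
  shows "x = y"
proof -
  have s: "supported V (x - y)" using assms unfolding supported_def by auto
  have "\<forall>w\<in>V. ip (x - y) w = 0" using assms(3) by (simp add: form_diff_left)
  then have "F (x - y) (x - y) = 0" by (simp add: form_eq[of "x - y" "x - y"])
  then have "x - y = 0" using negdef_zero[OF s] by simp
  then show ?thesis by simp
qed

lemma sol_exists: "\<exists>x. supported V x \<and> (\<forall>w\<in>V. ip x w = b w)"
proof -
  have "\<exists>x. (\<forall>v. v \<notin> V \<longrightarrow> x v = 0) \<and> (\<forall>w\<in>V. (\<Sum>v\<in>V. x v * M v w) = b w)"
  proof (rule lin_solve[OF fin])
    fix x :: "'v \<Rightarrow> rat"
    assume s: "\<forall>v. v \<notin> V \<longrightarrow> x v = 0" and h: "\<forall>w\<in>V. (\<Sum>v\<in>V. x v * M v w) = 0"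
    have "\<forall>w\<in>V. ip x w = 0" using h ip_eq by simp
    then have "F x x = 0" by (simp add: form_eq[of x x])
    then have "x = 0" using negdef_zero s unfolding supported_def by simp
    then show "\<forall>v\<in>V. x v = 0" by simp
  qed
  then show ?thesis unfolding supported_def using ip_eq by auto
qed

lemma sol_ex1: "\<exists>!x. supported V x \<and> (\<forall>w\<in>V. ip x w = b w)"
  using sol_exists[of b] sol_unique by metis

abbreviation Z where "Z \<equiv> ZK V adj e"

lemma ZK_prop: "supported V Z" "\<And>v. v \<in> V \<Longrightarrow> ip Z v = of_int (e v) + 2"
proof -
  have "supported V Z \<and> (\<forall>v\<in>V. ip Z v = of_int (e v) + 2)"
    unfolding ZK_def by (rule theI'[OF sol_ex1])
  then show "supported V Z" "\<And>v. v \<in> V \<Longrightarrow> ip Z v = of_int (e v) + 2" by auto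
qed

lemma Estar_prop: "supported V (Estar V adj e v)"
  "\<And>w. w \<in> V \<Longrightarrow> ip (Estar V adj e v) w = (if v = w then -1 else 0)"
proof -
  have "supported V (Estar V adj e v) \<and> (\<forall>w\<in>V. ip (Estar V adj e v) w = (if v = w then -1 else 0))"
    unfolding Estar_def by (rule theI'[OF sol_ex1])
  then show "supported V (Estar V adj e v)"
    "\<And>w. w \<in> V \<Longrightarrow> ip (Estar V adj e v) w = (if v = w then -1 else 0)" by auto
qed

lemma antinef_nonneg:
  assumes B: "B \<subseteq> V" and s: "supported B y" and an: "\<forall>u\<in>B. ip y u \<le> 0"
  shows "0 \<le> y"
proof -
  define yn where "yn = (\<lambda>v. max (- y v) 0)"
  define yp where "yp = (\<lambda>v. max (y v) 0)"
  have y: "y = yp - yn" unfolding yn_def yp_def by (auto simp: fun_eq_iff max_def)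
  have sn: "supported V yn" using s B unfolding supported_def yn_def by auto
  have "F yn yn = (\<Sum>w\<in>V. yn w * ip yn w)" by (rule form_eq)
  also have "\<dots> = (\<Sum>w\<in>V. yn w * ip yp w + (- yn w * ip y w))"
    by (intro sum.cong refl) (simp add: y form_diff_left algebra_simps)
  also have "\<dots> \<ge> 0"
  proof (intro sum_nonneg add_nonneg_nonneg)
    fix w assume w: "w \<in> V"
    show "0 \<le> yn w * ip yp w"
    proof (cases "yn w = 0")
      case False
      then have "yp w = 0" unfolding yn_def yp_def by auto
      have "\<forall>v\<in>V. 0 \<le> yp v * M v w"
      proof
        fix v assume "v \<in> V"
        show "0 \<le> yp v * M v w"
        proof (cases "v = w")
          case True then show ?thesis using \<open>yp w = 0\<close> by simp
        next
          case False then show ?thesis using imat_off unfolding yp_def by (simp add: mult_nonneg_nonneg)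
        qed
      qed
      moreover have "ip yp w = (\<Sum>v\<in>V. yp v * M v w)" using ip_eq[OF w] .
      ultimately have "0 \<le> ip yp w" by (simp add: sum_nonneg)
      then show ?thesis unfolding yn_def by simp
    qed simp
    show "0 \<le> - yn w * ip y w"
    proof (cases "yn w = 0")
      case False
      then have "y w \<noteq> 0" unfolding yn_def by auto
      then have "w \<in> B" using s unfolding supported_def by auto
      then have "ip y w \<le> 0" using an by auto
      then show ?thesis unfolding yn_def by (simp add: mult_nonneg_nonpos)
    qed simp
  qed
  finally have "yn = 0" using negdef_zero[OF sn] by simp
  then show "0 \<le> y" unfolding yn_def le_fun_def by (auto simp: fun_eq_iff max_def split: if_splits)
qed


end



context plumb
begin

lemma Ev_supp: "v \<in> V \<Longrightarrow> supported V (Ev v)"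
  unfolding supported_def Ev_def by auto

abbreviation chi' where "chi' \<equiv> chi V adj e"

lemma chi_add: "chi' (a + b) = chi' a + chi' b - F a b"
proof -
  have "F (a + b) (a + b - Z) = F a a + F a b - F a Z + (F b a + F b b - F b Z)"
    by (simp only: form_add_left form_add_right form_diff_right)
  moreover have "F a (a - Z) = F a a - F a Z" "F b (b - Z) = F b b - F b Z"
    by (simp_all only: form_diff_right)
  moreover have "F b a = F a b" by (rule form_sym)
  ultimately show ?thesis unfolding chi_def by (simp add: field_simps)
qed

lemma chi_Ev: "v \<in> V \<Longrightarrow> chi' (Ev v) = 1"
proof -
  assume v: "v \<in> V"
  have "ip (Ev v) v = (\<Sum>u\<in>V. Ev v u * M u v)" by (rule ip_eq[OF v])
  also have "\<dots> = (\<Sum>u\<in>V. if u = v then M v v else 0)" by (intro sum.cong refl) (simp add: Ev_def)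
  also have "\<dots> = M v v" using v fin by simp
  also have "\<dots> = of_int (e v)" by (simp add: imat_def)
  finally have 1: "F (Ev v) (Ev v) = of_int (e v)" .
  have "F (Ev v) Z = ip Z v" by (rule form_sym)
  then have 2: "F (Ev v) Z = of_int (e v) + 2" using ZK_prop(2)[OF v] by simp
  have "F (Ev v) (Ev v - Z) = F (Ev v) (Ev v) - F (Ev v) Z" by (rule form_diff_right)
  then show ?thesis unfolding chi_def using 1 2 by simp
qed

lemma ip_ge:
  assumes x: "0 \<le> x" "x v = 0" and v: "v \<in> V" and w: "w \<in> V"
  shows "0 \<le> ip x v" "x w * M w v \<le> ip x v"
proof -
  have nn: "\<forall>u\<in>V. 0 \<le> x u * M u v"
  proof
    fix u assume "u \<in> V"
    show "0 \<le> x u * M u v"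
    proof (cases "u = v")
      case True then show ?thesis using x by simp
    next
      case False then show ?thesis using imat_off x unfolding le_fun_def by (simp add: mult_nonneg_nonneg)
    qed
  qed
  show "0 \<le> ip x v" using ip_eq[OF v] nn by (simp add: sum_nonneg)
  show "x w * M w v \<le> ip x v" using ip_eq[OF v] nn member_le_sum[of w V "\<lambda>u. x u * M u v"] w fin
    by simp
qed

lemma ip_mono:
  assumes "g \<le> y" "g u = y u" "u \<in> V"
  shows "ip g u \<le> ip y u"
proof -
  have "(\<Sum>v\<in>V. g v * M v u) \<le> (\<Sum>v\<in>V. y v * M v u)"
  proof (rule sum_mono)
    fix v assume "v \<in> V"
    show "g v * M v u \<le> y v * M v u"
    proof (cases "v = u")
      case True then show ?thesis using assms by simp
    next
      case False then show ?thesis using imat_off[OF False] assms(1) unfolding le_fun_def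
        by (simp add: mult_right_mono)
    qed
  qed
  then show ?thesis using ip_eq[OF assms(3)] by simp
qed

lemma Ints_ge1: "(x::rat) \<in> \<int> \<Longrightarrow> 0 < x \<Longrightarrow> 1 \<le> x"
  by (elim Ints_cases) simp

lemma cross_edge:
  assumes S: "S \<subseteq> V" "a \<in> S" "b \<in> V" "b \<notin> S"
  shows "\<exists>w\<in>S. \<exists>v\<in>V. v \<notin> S \<and> adj w v"
proof -
  have "adj\<^sup>*\<^sup>* a b" using conn S by auto
  then show ?thesis using S(4)
  proof (induction rule: rtranclp_induct)
    case base then show ?case using S by simp
  next
    case (step y z)
    show ?case
    proof (cases "y \<in> S")
      case True then show ?thesis using step adjV[OF step(2)] by blast
    next
      case False then show ?thesis using step by blast
    qed
  qed
qed

definition conn_on :: "'v set \<Rightarrow> bool" where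
  "conn_on B \<longleftrightarrow> (\<forall>S. S \<subseteq> B \<and> S \<noteq> {} \<and> S \<noteq> B \<longrightarrow> (\<exists>u\<in>S. \<exists>w\<in>B - S. adj u w))"

lemma latL_add: "a \<in> latL B \<Longrightarrow> b \<in> latL B \<Longrightarrow> a + b \<in> latL B"
  unfolding latL_def supported_def by auto
lemma latL_diff: "a \<in> latL B \<Longrightarrow> b \<in> latL B \<Longrightarrow> a - b \<in> latL B"
  unfolding latL_def supported_def by auto
lemma latL_Ev: "v \<in> B \<Longrightarrow> Ev v \<in> latL B"
  unfolding latL_def supported_def Ev_def by auto

end

locale ellg = plumb +
  assumes ell: "elliptic V adj e"
begin

lemma e_le: "v \<in> V \<Longrightarrow> e v \<le> -2" using ell unfolding elliptic_def by auto

lemma chi_nonneg: "l \<in> latL V \<Longrightarrow> 0 \<le> l \<Longrightarrow> l \<noteq> 0 \<Longrightarrow> 0 \<le> chi' l"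
  using ell unfolding elliptic_def by (auto simp: less_le)

lemma no_two_aux:
  assumes l2: "l2 \<in> latL V" "0 \<le> l2" "l2 \<noteq> 0" "chi' l2 \<le> 0"
  shows "card (V - supp V l1) = n \<Longrightarrow> l1 \<in> latL V \<Longrightarrow> 0 \<le> l1 \<Longrightarrow> l1 \<noteq> 0 \<Longrightarrow> chi' l1 \<le> 0
     \<Longrightarrow> (\<forall>v. l1 v \<noteq> 0 \<longrightarrow> l2 v = 0) \<Longrightarrow> False"
proof (induction n arbitrary: l1 rule: less_induct)
  case (less n l1)
  have s1: "supported V l1" and i1: "\<forall>v. l1 v \<in> \<int>" using less.prems unfolding latL_def by auto
  have s2: "supported V l2" and i2: "\<forall>v. l2 v \<in> \<int>" using l2 unfolding latL_def by auto
  show False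
  proof (cases "\<exists>v w. adj w v \<and> l1 w \<noteq> 0 \<and> l2 v \<noteq> 0")
    case True
    then obtain v w where vw: "adj w v" "l1 w \<noteq> 0" "l2 v \<noteq> 0" by blast
    have vV: "v \<in> V" and wV: "w \<in> V" using adjV[OF vw(1)] by auto
    have l1v: "l1 v = 0" using less.prems(6) vw by auto
    have "F l1 l2 = (\<Sum>u\<in>V. l2 u * ip l1 u)" by (rule form_eq)
    also have "\<dots> > 0"
    proof -
      have nn: "\<forall>u\<in>V. 0 \<le> l2 u * ip l1 u"
      proof
        fix u assume u: "u \<in> V"
        show "0 \<le> l2 u * ip l1 u"
        proof (cases "l2 u = 0")
          case False
          then have "l1 u = 0" using less.prems(6) by auto
          then show ?thesis using ip_ge(1)[OF less.prems(3) _ u u] l2(2) unfolding le_fun_def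
            by (simp add: mult_nonneg_nonneg)
        qed simp
      qed
      have "0 < l1 w" using less.prems(3) vw(2) unfolding le_fun_def by (simp add: less_le)
      then have "0 < ip l1 v" using ip_ge(2)[OF less.prems(3) l1v vV wV] imat_adj[OF vw(1)] by simp
      moreover have "0 < l2 v" using l2(2) vw(3) unfolding le_fun_def by (simp add: less_le)
      ultimately have "0 < l2 v * ip l1 v" by simp
      then show ?thesis using member_le_sum[of v V "\<lambda>u. l2 u * ip l1 u"] nn vV fin by force
    qed
    finally have pos: "F l1 l2 > 0" .
    have "l1 + l2 \<in> latL V" using less.prems(2) l2(1) by (rule latL_add)
    moreover have "0 \<le> l1 + l2" using less.prems(3) l2(2) by (auto simp: le_fun_def zero_fun_def)
    moreover have "l1 + l2 \<noteq> 0"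
    proof
      assume "l1 + l2 = 0"
      then have "l1 w + l2 w = 0" by (metis plus_fun_apply zero_fun_def)
      then show False using vw(2) less.prems(3) l2(2) unfolding le_fun_def
        by (metis add_nonneg_eq_0_iff zero_fun_def)
    qed
    ultimately have "0 \<le> chi' (l1 + l2)" by (rule chi_nonneg)
    then show False using chi_add[of l1 l2] pos less.prems(5) l2(4) by simp
  next
    case False
    obtain a where a: "l1 a \<noteq> 0" using less.prems(4) by (auto simp: fun_eq_iff)
    obtain b where b: "l2 b \<noteq> 0" using l2(3) by (auto simp: fun_eq_iff)
    have aS: "a \<in> supp V l1" using a s1 unfolding supp_def supported_def by auto
    have bS: "b \<in> V" "b \<notin> supp V l1" using b s2 less.prems(6) unfolding supp_def supported_def by auto
    obtain w v where wv: "w \<in> supp V l1" "v \<in> V" "v \<notin> supp V l1" "adj w v"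
      using cross_edge[of "supp V l1" a b] aS bS unfolding supp_def by blast
    have wV: "w \<in> V" and l1w: "l1 w \<noteq> 0" using wv(1) unfolding supp_def by auto
    have l1v: "l1 v = 0" using wv(2,3) unfolding supp_def by auto
    have l2v: "l2 v = 0" using False wv(4) l1w by blast
    define l1' where "l1' = l1 + Ev v"
    have "0 < l1 w" using less.prems(3) l1w unfolding le_fun_def by (simp add: less_le)
    then have "1 \<le> l1 w" using i1 Ints_ge1 by blast
    then have ipv: "1 \<le> ip l1 v" using ip_ge(2)[OF less.prems(3) l1v wv(2) wV] imat_adj[OF wv(4)] by simp
    have chi': "chi' l1' \<le> 0"
      using chi_add[of l1 "Ev v"] chi_Ev[OF wv(2)] ipv less.prems(5) unfolding l1'_def by simp
    have L: "l1' \<in> latL V" unfolding l1'_def using less.prems(2) latL_Ev[OF wv(2)] by (rule latL_add)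
    have P: "0 \<le> l1'" unfolding l1'_def using less.prems(3) by (simp add: le_fun_def Ev_def)
    have N: "l1' \<noteq> 0"
    proof
      assume "l1' = 0" then have "l1' v = 0" by simp
      then show False unfolding l1'_def using l1v by (simp add: Ev_def)
    qed
    have D: "\<forall>u. l1' u \<noteq> 0 \<longrightarrow> l2 u = 0" using less.prems(6) l2v unfolding l1'_def by (auto simp: Ev_def)
    have supp': "supp V l1' = insert v (supp V l1)"
      unfolding l1'_def supp_def using less.prems(3) wv(2) unfolding le_fun_def
      by (auto simp: Ev_def add_nonneg_eq_0_iff)
    have "card (V - supp V l1') < n"
    proof -
      have "V - supp V l1' = (V - supp V l1) - {v}" using supp' by auto
      moreover have "v \<in> V - supp V l1" using wv by auto
      ultimately show ?thesis using less.prems(1) fin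
        by (metis card_Diff1_less finite_Diff)
    qed
    then show False using less.IH[OF _ refl L P N chi' D] by blast
  qed
qed

lemma no_two:
  assumes "l2 \<in> latL V" "0 \<le> l2" "l2 \<noteq> 0" "chi' l2 \<le> 0"
    "l1 \<in> latL V" "0 \<le> l1" "l1 \<noteq> 0" "chi' l1 \<le> 0" "\<forall>v. l1 v \<noteq> 0 \<longrightarrow> l2 v = 0"
  shows False
  using no_two_aux[OF assms(1-4) refl assms(5-9)] .

end



context ellg
begin

lemma supp_conn:
  assumes D: "D \<in> latL V" "0 \<le> D" "chi' D \<le> 0"
  shows "conn_on (supp V D)"
  unfolding conn_on_def
proof (intro allI impI, rule ccontr)
  fix S assume S: "S \<subseteq> supp V D \<and> S \<noteq> {} \<and> S \<noteq> supp V D"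
    and no: "\<not> (\<exists>u\<in>S. \<exists>w\<in>supp V D - S. adj u w)"
  have sD: "supported V D" and iD: "\<forall>v. D v \<in> \<int>" using D(1) unfolding latL_def by auto
  define D1 where "D1 = (\<lambda>v. if v \<in> S then D v else 0)"
  define D2 where "D2 = D - D1"
  have DD: "D = D1 + D2" unfolding D2_def by simp
  have L1: "D1 \<in> latL V" using sD iD S unfolding D1_def latL_def supported_def supp_def by auto
  have L2: "D2 \<in> latL V" unfolding D2_def using D(1) L1 by (rule latL_diff)
  have P1: "0 \<le> D1" using D(2) unfolding D1_def le_fun_def by auto
  have P2: "0 \<le> D2" using D(2) unfolding D2_def D1_def le_fun_def by auto
  obtain a where a: "a \<in> S" using S by auto
  obtain b where b: "b \<in> supp V D" "b \<notin> S" using S by auto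
  have N1: "D1 \<noteq> 0"
  proof
    assume "D1 = 0" then have "D1 a = 0" by simp
    then show False using a S unfolding D1_def supp_def by auto
  qed
  have N2: "D2 \<noteq> 0"
  proof
    assume "D2 = 0" then have "D2 b = 0" by simp
    then show False using b unfolding D2_def D1_def supp_def by auto
  qed
  have F0: "F D1 D2 = 0"
  proof -
    have "F D1 D2 = (\<Sum>w\<in>V. D2 w * ip D1 w)" by (rule form_eq)
    also have "\<dots> = (\<Sum>w\<in>V. 0)"
    proof (intro sum.cong refl)
      fix w assume w: "w \<in> V"
      show "D2 w * ip D1 w = 0"
      proof (cases "D2 w = 0")
        case False
        then have wS: "w \<in> supp V D - S" using w unfolding D2_def D1_def supp_def by (auto split: if_splits)
        have "ip D1 w = (\<Sum>u\<in>V. D1 u * M u w)" by (rule ip_eq[OF w])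
        also have "\<dots> = (\<Sum>u\<in>V. 0)"
        proof (intro sum.cong refl)
          fix u assume u: "u \<in> V"
          show "D1 u * M u w = 0"
          proof (cases "u \<in> S")
            case True
            then have "u \<noteq> w" "\<not> adj u w" using wS no by auto
            then have "M u w = 0" unfolding imat_def by simp
            then show ?thesis by simp
          next
            case False then show ?thesis unfolding D1_def by simp
          qed
        qed
        finally show ?thesis by simp
      qed simp
    qed
    finally show ?thesis by simp
  qed
  have c1: "0 \<le> chi' D1" by (rule chi_nonneg[OF L1 P1 N1])
  have c2: "0 \<le> chi' D2" by (rule chi_nonneg[OF L2 P2 N2])
  have "chi' D = chi' D1 + chi' D2" using chi_add[of D1 D2] F0 DD by simp
  then have "chi' D1 \<le> 0" "chi' D2 \<le> 0" using c1 c2 D(3) by linarith+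
  moreover have "\<forall>v. D1 v \<noteq> 0 \<longrightarrow> D2 v = 0" unfolding D2_def D1_def by auto
  ultimately show False using no_two[OF L2 P2 N2 _ L1 P1 N1] by blast
qed

end

context plumb
begin

lemma inf_fun_apply': "inf (f::'v \<Rightarrow> rat) g x = min (f x) (g x)"
  by (simp add: inf_min)

lemma fin_box:
  assumes "finite B" "\<And>v. v \<in> B \<Longrightarrow> finite (W v)"
  shows "finite {y. (\<forall>x. x \<notin> B \<longrightarrow> y x = 0) \<and> (\<forall>x\<in>B. y x \<in> W x)}"
proof -
  have "finite {f. \<forall>x. (x \<in> B \<longrightarrow> f x \<in> (\<Union>v\<in>B. W v)) \<and> (x \<notin> B \<longrightarrow> f x = 0)}"
    using assms by (intro finite_set_of_finite_funs) auto
  then show ?thesis by (rule finite_subset[rotated]) auto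
qed

lemma Zmin_prop:
  assumes B: "B \<subseteq> V" "conn_on B" and D: "D \<in> latL B" "D \<noteq> 0" "\<forall>v\<in>B. ip D v \<le> 0"
  shows "Zmin V adj e B \<in> latL B \<and> Zmin V adj e B \<noteq> 0 \<and> (\<forall>v\<in>B. ip (Zmin V adj e B) v \<le> 0)
     \<and> Zmin V adj e B \<le> D"
proof -
  define Q where "Q y \<longleftrightarrow> y \<in> latL B \<and> y \<noteq> 0 \<and> (\<forall>v\<in>B. ip y v \<le> 0)" for y
  have QD: "Q D" using D unfolding Q_def by auto
  have finB: "finite B" using B(1) fin finite_subset by blast
  obtain b0 where b0: "b0 \<in> B" using D(1,2) unfolding latL_def supported_def by (auto simp: fun_eq_iff)
  have nonneg: "Q y \<Longrightarrow> 0 \<le> y" for y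
    using antinef_nonneg[OF B(1)] unfolding Q_def latL_def by auto
  have pos: "\<forall>u\<in>B. 0 < y u" if Qy: "Q y" for y
  proof (rule ccontr)
    assume "\<not> (\<forall>u\<in>B. 0 < y u)"
    then obtain c where c: "c \<in> B" "\<not> 0 < y c" by auto
    have y0: "0 \<le> y" using nonneg[OF Qy] .
    obtain a where a: "y a \<noteq> 0" using Qy unfolding Q_def by (auto simp: fun_eq_iff)
    have aB: "a \<in> B" using a Qy unfolding Q_def latL_def supported_def by auto
    define S where "S = {u\<in>B. 0 < y u}"
    have "a \<in> S" using a aB y0 unfolding S_def le_fun_def by (auto simp: less_le)
    moreover have "c \<notin> S" using c unfolding S_def by auto
    ultimately obtain u w where uw: "u \<in> S" "w \<in> B - S" "adj u w"
    proof -
      have "S \<subseteq> B" "S \<noteq> {}" "S \<noteq> B" using \<open>a \<in> S\<close> \<open>c \<notin> S\<close> c(1) unfolding S_def by auto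
      then show ?thesis using B(2) that unfolding conn_on_def by blast
    qed
    have yw: "y w = 0" using uw(2) y0 unfolding S_def le_fun_def by (auto simp: less_le)
    have "y u * M u w \<le> ip y w" using ip_ge(2)[OF y0 yw] uw B(1) S_def by auto
    then have "0 < ip y w" using uw imat_adj[OF uw(3)] unfolding S_def by auto
    moreover have "ip y w \<le> 0" using Qy uw(2) unfolding Q_def by auto
    ultimately show False by simp
  qed
  have Qinf: "Q (inf y1 y2)" if Q1: "Q y1" and Q2: "Q y2" for y1 y2
  proof -
    let ?g = "inf y1 y2"
    have "?g \<in> latL B" using Q1 Q2 unfolding Q_def latL_def supported_def
      by (auto simp: inf_fun_apply' inf_min min_def)
    moreover have "?g \<noteq> 0"
    proof
      assume "?g = 0" then have "?g b0 = 0" by simp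
      moreover have "0 < y1 b0" "0 < y2 b0" using pos[OF Q1] pos[OF Q2] b0 by auto
      ultimately show False by (simp add: inf_min min_def split: if_splits)
    qed
    moreover have "\<forall>v\<in>B. ip ?g v \<le> 0"
    proof
      fix v assume v: "v \<in> B"
      show "ip ?g v \<le> 0"
      proof (cases "y1 v \<le> y2 v")
        case True
        have "ip ?g v \<le> ip y1 v" using True v B(1) by (intro ip_mono) (auto simp: le_fun_def inf_min)
        then show ?thesis using Q1 v unfolding Q_def by auto
      next
        case False
        have "ip ?g v \<le> ip y2 v" using False v B(1) by (intro ip_mono) (auto simp: le_fun_def inf_min)
        then show ?thesis using Q2 v unfolding Q_def by auto
      qed
    qed
    ultimately show ?thesis unfolding Q_def by blast
  qed
  define FS where "FS = {y. Q y \<and> y \<le> D}"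
  have "FS \<subseteq> {y. (\<forall>x. x \<notin> B \<longrightarrow> y x = 0) \<and> (\<forall>x\<in>B. y x \<in> of_int ` {0..\<lceil>D x\<rceil>})}"
  proof (intro subsetI CollectI conjI allI impI ballI)
    fix y x assume y: "y \<in> FS"
    then have Qy: "Q y" and yD: "y \<le> D" unfolding FS_def by auto
    show "x \<notin> B \<Longrightarrow> y x = 0" using Qy unfolding Q_def latL_def supported_def by auto
    assume "x \<in> B"
    have "y x \<in> \<int>" using Qy unfolding Q_def latL_def by auto
    then obtain k where k: "y x = of_int k" by (elim Ints_cases) auto
    have "0 \<le> y x" using nonneg[OF Qy] unfolding le_fun_def by auto
    then have "0 \<le> k" using k by simp
    moreover have "of_int k \<le> D x" using yD k unfolding le_fun_def by (metis)
    then have "k \<le> \<lceil>D x\<rceil>" by (meson ceiling_mono ceiling_of_int order_trans le_of_int_ceiling of_int_le_iff)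
    ultimately show "y x \<in> of_int ` {0..\<lceil>D x\<rceil>}" using k by auto
  qed
  moreover have "finite {y. (\<forall>x. x \<notin> B \<longrightarrow> y x = 0) \<and> (\<forall>x\<in>B. y x \<in> of_int ` {0..\<lceil>D x\<rceil>})}"
    by (rule fin_box[OF finB]) simp
  ultimately have finFS: "finite FS" by (rule finite_subset)
  have "FS \<noteq> {}" using QD unfolding FS_def by auto
  then obtain z where z: "z \<in> FS" "\<forall>b\<in>FS. b \<le> z \<longrightarrow> z = b" using finite_has_minimal[OF finFS] by blast
  have Qz: "Q z" and zD: "z \<le> D" using z(1) unfolding FS_def by auto
  have zmin: "z \<le> y" if "Q y" for y
  proof -
    have "inf z y \<le> D" using zD inf.coboundedI1 by blast
    then have "inf z y \<in> FS" using Qinf[OF Qz that] unfolding FS_def by auto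
    then have "z = inf z y" using z(2) by auto
    then show ?thesis using inf.cobounded2[of z y] by simp
  qed
  have ex1: "\<exists>!z. Q z \<and> (\<forall>y. Q y \<longrightarrow> z \<le> y)"
  proof (rule ex1I)
    show "Q z \<and> (\<forall>y. Q y \<longrightarrow> z \<le> y)" using Qz zmin by blast
  next
    fix z' assume "Q z' \<and> (\<forall>y. Q y \<longrightarrow> z' \<le> y)"
    then show "z' = z" using Qz zmin by (blast intro: order_antisym)
  qed
  have eq: "Zmin V adj e B = (THE z. Q z \<and> (\<forall>y. Q y \<longrightarrow> z \<le> y))"
    unfolding Zmin_def Q_def conj_assoc by (rule refl)
  have "Q (Zmin V adj e B) \<and> (\<forall>y. Q y \<longrightarrow> Zmin V adj e B \<le> y)"
    unfolding eq by (rule theI'[OF ex1])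
  then show ?thesis using QD unfolding Q_def by blast
qed

end



context ellg
begin

lemma form_int: "a \<in> latL V \<Longrightarrow> b \<in> latL V \<Longrightarrow> F a b \<in> \<int>"
  unfolding form_def latL_def imat_def by (auto intro!: Ints_sum Ints_mult)

lemma Z_dual: "l \<in> latL V \<Longrightarrow> F Z l \<in> \<int>"
proof -
  assume l: "l \<in> latL V"
  have "F Z l = (\<Sum>w\<in>V. l w * ip Z w)" by (rule form_eq)
  also have "\<dots> = (\<Sum>w\<in>V. l w * (of_int (e w) + 2))" using ZK_prop(2) by simp
  also have "\<dots> \<in> \<int>" using l unfolding latL_def by (auto intro!: Ints_sum Ints_mult Ints_add)
  finally show ?thesis .
qed

lemma dual_shift: "y - Z \<in> latL V \<Longrightarrow> y \<in> latLdual V adj e"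
proof -
  assume y: "y - Z \<in> latL V"
  have yy: "y = (y - Z) + Z" by simp
  have "supported V y" unfolding supported_def
  proof (intro allI impI)
    fix v assume v: "v \<notin> V"
    have "(y - Z) v = 0" using y v unfolding latL_def supported_def by blast
    moreover have "Z v = 0" using ZK_prop(1) v unfolding supported_def by blast
    ultimately show "y v = 0" by simp
  qed
  moreover have "F y l \<in> \<int>" if l: "l \<in> latL V" for l
  proof -
    have "F y l = F (y - Z) l + F Z l" by (subst yy) (simp only: form_add_left)
    then show ?thesis using form_int[OF y l] Z_dual[OF l] by simp
  qed
  ultimately show ?thesis unfolding latLdual_def by auto
qed

lemma s_prop:
  shows "s_cls V adj e Z - Z \<in> latL V \<and> (\<forall>v\<in>V. ip (s_cls V adj e Z) v \<le> 0) \<and> s_cls V adj e Z \<le> Z"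
proof -
  define Q where "Q y \<longleftrightarrow> y \<in> Sdual V adj e \<and> y - Z \<in> latL V" for y
  have Qiff: "Q y \<longleftrightarrow> y - Z \<in> latL V \<and> (\<forall>v\<in>V. ip y v \<le> 0)" for y
    unfolding Q_def Sdual_def using dual_shift by auto
  have QZ: "Q Z" unfolding Qiff using ZK_prop(2) e_le unfolding latL_def supported_def by force
  have suppQ: "Q y \<Longrightarrow> supported V y" for y
    using dual_shift unfolding Q_def latLdual_def by auto
  have nonneg: "Q y \<Longrightarrow> 0 \<le> y" for y
    using antinef_nonneg[of V y] suppQ unfolding Qiff by auto
  have Qinf: "Q (inf y1 y2)" if Q1: "Q y1" and Q2: "Q y2" for y1 y2
  proof -
    let ?g = "inf y1 y2"
    have "?g - Z \<in> latL V"
    proof -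
      have "?g - Z = inf (y1 - Z) (y2 - Z)" by (auto simp: fun_eq_iff inf_min min_def)
      moreover have "inf (y1 - Z) (y2 - Z) \<in> latL V" using Q1 Q2 unfolding Qiff latL_def supported_def
        by (auto simp: inf_min min_def)
      ultimately show ?thesis by simp
    qed
    moreover have "\<forall>v\<in>V. ip ?g v \<le> 0"
    proof
      fix v assume v: "v \<in> V"
      show "ip ?g v \<le> 0"
      proof (cases "y1 v \<le> y2 v")
        case True
        have "ip ?g v \<le> ip y1 v" using True v by (intro ip_mono) (auto simp: le_fun_def inf_min)
        then show ?thesis using Q1 v unfolding Qiff by auto
      next
        case False
        have "ip ?g v \<le> ip y2 v" using False v by (intro ip_mono) (auto simp: le_fun_def inf_min)
        then show ?thesis using Q2 v unfolding Qiff by auto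
      qed
    qed
    ultimately show ?thesis unfolding Qiff by blast
  qed
  define FS where "FS = {y. Q y \<and> y \<le> Z}"
  have "FS \<subseteq> {y. (\<forall>x. x \<notin> V \<longrightarrow> y x = 0) \<and> (\<forall>x\<in>V. y x \<in> (\<lambda>k. of_int k + Z x) ` {-\<lceil>Z x\<rceil>..0})}"
  proof (intro subsetI CollectI conjI allI impI ballI)
    fix y x assume y: "y \<in> FS"
    then have Qy: "Q y" and yD: "y \<le> Z" unfolding FS_def by auto
    show "x \<notin> V \<Longrightarrow> y x = 0" using suppQ[OF Qy] unfolding supported_def by auto
    assume "x \<in> V"
    have "(y - Z) x \<in> \<int>" using Qy unfolding Qiff latL_def by auto
    then obtain k where k: "y x - Z x = of_int k" by (elim Ints_cases) auto
    have "0 \<le> y x" using nonneg[OF Qy] unfolding le_fun_def by auto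
    then have "- Z x \<le> of_int k" using k by simp
    then have "- of_int (\<lceil>Z x\<rceil>) \<le> (of_int k :: rat)" using le_of_int_ceiling[of "Z x"] by linarith
    then have "- \<lceil>Z x\<rceil> \<le> k" by (metis of_int_le_iff of_int_minus)
    moreover have "y x \<le> Z x" using yD unfolding le_fun_def by blast
    then have "(of_int k :: rat) \<le> 0" using k by simp
    then have "k \<le> 0" by simp
    ultimately show "y x \<in> (\<lambda>k. of_int k + Z x) ` {-\<lceil>Z x\<rceil>..0}" using k
      by (intro image_eqI[of _ _ k]) auto
  qed
  moreover have "finite {y. (\<forall>x. x \<notin> V \<longrightarrow> y x = 0) \<and> (\<forall>x\<in>V. y x \<in> (\<lambda>k. of_int k + Z x) ` {-\<lceil>Z x\<rceil>..0})}"
    by (rule fin_box[OF fin]) simp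
  ultimately have finFS: "finite FS" by (rule finite_subset)
  have "FS \<noteq> {}" using QZ unfolding FS_def by auto
  then obtain z where z: "z \<in> FS" "\<forall>b\<in>FS. b \<le> z \<longrightarrow> z = b" using finite_has_minimal[OF finFS] by blast
  have Qz: "Q z" and zD: "z \<le> Z" using z(1) unfolding FS_def by auto
  have zmin: "z \<le> y" if "Q y" for y
  proof -
    have "inf z y \<le> Z" using zD inf.coboundedI1 by blast
    then have "inf z y \<in> FS" using Qinf[OF Qz that] unfolding FS_def by auto
    then have "z = inf z y" using z(2) by auto
    then show ?thesis using inf.cobounded2[of z y] by simp
  qed
  have ex1: "\<exists>!z. Q z \<and> (\<forall>y. Q y \<longrightarrow> z \<le> y)"
  proof (rule ex1I)
    show "Q z \<and> (\<forall>y. Q y \<longrightarrow> z \<le> y)" using Qz zmin by blast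
  next
    fix z' assume "Q z' \<and> (\<forall>y. Q y \<longrightarrow> z' \<le> y)"
    then show "z' = z" using Qz zmin by (blast intro: order_antisym)
  qed
  have eq: "s_cls V adj e Z = (THE z. Q z \<and> (\<forall>y. Q y \<longrightarrow> z \<le> y))"
    unfolding s_cls_def Q_def by (rule arg_cong[where f=The]) (auto simp: fun_eq_iff)
  have "Q (s_cls V adj e Z) \<and> (\<forall>y. Q y \<longrightarrow> s_cls V adj e Z \<le> y)"
    unfolding eq by (rule theI'[OF ex1])
  then show ?thesis using QZ unfolding Qiff by blast
qed

definition invk :: "nat \<Rightarrow> bool" where
  "invk k \<longleftrightarrow> Z - nnC V adj e k \<in> latL V \<and> 0 \<le> Z - nnC V adj e k \<and>
     (\<forall>u\<in>supp V (Z - nnC V adj e k). ip (nnC V adj e k) u = 0)"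

lemma sum_zero_terms:
  assumes "\<forall>w\<in>V. t w \<le> (0::rat)" "(\<Sum>w\<in>V. t w) = 0" "u \<in> V"
  shows "t u = 0"
proof -
  have "(\<Sum>w\<in>V. - t w) = 0" using assms(2) by (simp add: sum_negf)
  then have "\<forall>w\<in>V. - t w = 0" using sum_nonneg_eq_0_iff[OF fin, of "\<lambda>w. - t w"] assms(1) by auto
  then show ?thesis using assms(3) by auto
qed

lemma chi_D:
  assumes "\<forall>u\<in>supp V (Z - C). ip C u = 0" "supported V (Z - C)"
  shows "chi' (Z - C) = 0"
proof -
  have "F C (Z - C) = (\<Sum>w\<in>V. (Z - C) w * ip C w)" by (rule form_eq)
  also have "\<dots> = (\<Sum>w\<in>V. 0)"
    using assms(1) by (intro sum.cong refl) (auto simp: supp_def)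
  finally have "F C (Z - C) = 0" by simp
  then have 1: "F (Z - C) C = 0" using form_sym[of C "Z - C"] by simp
  have "Z - C - Z = - C" by (simp add: fun_eq_iff)
  then have "F (Z - C) (Z - C - Z) = - F (Z - C) C" using form_uminus_right[of "Z - C" C] by simp
  then show ?thesis unfolding chi_def using 1 by simp
qed

lemma inv0: "invk 0"
proof -
  define s where "s = s_cls V adj e Z"
  have s: "s - Z \<in> latL V" "\<forall>v\<in>V. ip s v \<le> 0" "s \<le> Z" using s_prop unfolding s_def by auto
  have C0: "nnC V adj e 0 = s" unfolding s_def by simp
  have "0 - (s - Z) \<in> latL V" using s(1) by (intro latL_diff[where a=0 and b="s - Z"]) (auto simp: latL_def supported_def)
  moreover have "0 - (s - Z) = Z - s" by (simp add: fun_eq_iff)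
  ultimately have L: "Z - s \<in> latL V" by simp
  have P: "0 \<le> Z - s" using s(3) unfolding le_fun_def by auto
  have "\<forall>u\<in>supp V (Z - s). ip s u = 0"
  proof (cases "Z - s = 0")
    case True then show ?thesis unfolding supp_def by auto
  next
    case False
    have c: "0 \<le> chi' (Z - s)" by (rule chi_nonneg[OF L P False])
    have "F s (Z - s) = (\<Sum>w\<in>V. (Z - s) w * ip s w)" by (rule form_eq)
    then have 1: "F (Z - s) s = (\<Sum>w\<in>V. (Z - s) w * ip s w)" using form_sym[of s "Z - s"] by simp
    have "Z - s - Z = - s" by (simp add: fun_eq_iff)
    then have "F (Z - s) (Z - s - Z) = - F (Z - s) s" using form_uminus_right[of "Z - s" s] by simp
    then have chi: "chi' (Z - s) = (\<Sum>w\<in>V. (Z - s) w * ip s w) / 2"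
      unfolding chi_def using 1 by simp
    have tn: "\<forall>w\<in>V. (Z - s) w * ip s w \<le> 0"
      using P s(2) unfolding le_fun_def by (auto simp: mult_nonneg_nonpos)
    then have "(\<Sum>w\<in>V. (Z - s) w * ip s w) \<le> 0" by (simp add: sum_nonpos)
    then have "(\<Sum>w\<in>V. (Z - s) w * ip s w) = 0" using c chi by simp
    then have "\<forall>u\<in>V. (Z - s) u * ip s u = 0" using sum_zero_terms[OF tn] by blast
    then show ?thesis unfolding supp_def by auto
  qed
  then show ?thesis unfolding invk_def C0 using L P by blast
qed

lemma invS:
  assumes I: "invk k" and nz: "Z - nnC V adj e k \<noteq> 0"
  shows "invk (Suc k)"
proof -
  define C where "C = nnC V adj e k"
  define D where "D = Z - C"
  define B where "B = supp V D"
  have I': "D \<in> latL V" "0 \<le> D" "\<forall>u\<in>B. ip C u = 0" using I unfolding invk_def C_def D_def B_def by auto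
  have sD: "supported V D" using I'(1) unfolding latL_def by auto
  have BV: "B \<subseteq> V" unfolding B_def supp_def by auto
  have cD: "chi' D = 0" unfolding D_def by (rule chi_D) (use I' sD in \<open>auto simp: D_def B_def\<close>)
  have conn: "conn_on B" unfolding B_def using supp_conn[OF I'(1,2)] cD by simp
  have DB: "D \<in> latL B" using I'(1) unfolding latL_def supported_def B_def supp_def by auto
  have Dnz: "D \<noteq> 0" using nz unfolding D_def C_def .
  have ipD: "\<forall>v\<in>B. ip D v \<le> 0"
  proof
    fix v assume v: "v \<in> B"
    have "ip D v = ip Z v - ip C v" unfolding D_def by (rule form_diff_left)
    then show "ip D v \<le> 0" using ZK_prop(2)[of v] e_le[of v] I'(3) v BV by force
  qed
  define Zm where "Zm = Zmin V adj e B"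
  have Zm: "Zm \<in> latL B" "Zm \<noteq> 0" "\<forall>v\<in>B. ip Zm v \<le> 0" "Zm \<le> D"
    using Zmin_prop[OF BV conn DB Dnz ipD] unfolding Zm_def by auto
  have Zm0: "0 \<le> Zm" using antinef_nonneg[OF BV] Zm(1,3) unfolding latL_def by auto
  have CS: "nnC V adj e (Suc k) = C + Zm" unfolding C_def Zm_def B_def D_def by simp
  define R where "R = D - Zm"
  have RR: "Z - nnC V adj e (Suc k) = R" unfolding CS R_def D_def by simp
  have ZmV: "Zm \<in> latL V" using Zm(1) BV unfolding latL_def supported_def by auto
  have RL: "R \<in> latL V" unfolding R_def using I'(1) ZmV by (rule latL_diff)
  have R0: "0 \<le> R" using Zm(4) unfolding R_def le_fun_def by auto
  have RB: "R w \<noteq> 0 \<Longrightarrow> w \<in> B" for w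
  proof -
    assume "R w \<noteq> 0"
    moreover have "D w = 0 \<Longrightarrow> R w = 0"
    proof -
      assume d: "D w = 0"
      have "Zm w \<le> D w" "0 \<le> Zm w" using Zm(4) Zm0 unfolding le_fun_def by auto
      then have "Zm w = 0" using d by simp
      then show "R w = 0" using d unfolding R_def by simp
    qed
    ultimately have "D w \<noteq> 0" by blast
    then show "w \<in> B" using sD unfolding B_def supp_def supported_def by auto
  qed
  have ipZm: "\<forall>u\<in>supp V R. ip Zm u = 0"
  proof (cases "R = 0")
    case True then show ?thesis unfolding supp_def by auto
  next
    case False
    have c: "0 \<le> chi' R" by (rule chi_nonneg[OF RL R0 False])
    have "F C R = (\<Sum>w\<in>V. R w * ip C w)" by (rule form_eq)
    also have "\<dots> = (\<Sum>w\<in>V. 0)" using RB I'(3) by (intro sum.cong refl) (case_tac "R x = 0", auto)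
    finally have "F C R = 0" by simp
    then have FC: "F R C = 0" using form_sym[of C R] by simp
    have "F Zm R = (\<Sum>w\<in>V. R w * ip Zm w)" by (rule form_eq)
    then have FZ: "F R Zm = (\<Sum>w\<in>V. R w * ip Zm w)" using form_sym[of Zm R] by simp
    have "R - Z = - C - Zm" unfolding R_def D_def by (simp add: fun_eq_iff)
    then have "F R (R - Z) = F R (- C) - F R Zm" using form_diff_right[of R "- C" Zm] by simp
    then have "F R (R - Z) = - F R C - F R Zm" using form_uminus_right[of R C] by simp
    then have chi: "chi' R = (\<Sum>w\<in>V. R w * ip Zm w) / 2" unfolding chi_def using FC FZ by simp
    have tn: "\<forall>w\<in>V. R w * ip Zm w \<le> 0"
    proof
      fix w assume "w \<in> V"
      show "R w * ip Zm w \<le> 0"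
      proof (cases "R w = 0")
        case False
        then have "ip Zm w \<le> 0" using RB Zm(3) by blast
        then show ?thesis using R0 unfolding le_fun_def by (simp add: mult_nonneg_nonpos)
      qed simp
    qed
    then have "(\<Sum>w\<in>V. R w * ip Zm w) \<le> 0" by (simp add: sum_nonpos)
    then have "(\<Sum>w\<in>V. R w * ip Zm w) = 0" using c chi by simp
    then have "\<forall>u\<in>V. R u * ip Zm u = 0" using sum_zero_terms[OF tn] by blast
    then show ?thesis unfolding supp_def by auto
  qed
  have "\<forall>u\<in>supp V R. ip (C + Zm) u = 0"
  proof
    fix u assume u: "u \<in> supp V R"
    then have "u \<in> B" using RB unfolding supp_def by auto
    then show "ip (C + Zm) u = 0" using I'(3) ipZm u by (simp add: form_add_left)
  qed
  then show ?thesis unfolding invk_def RR unfolding CS using RL R0 by blast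
qed

end



context ellg
begin

lemma invk_all:
  assumes mf: "\<forall>i. -1 \<le> i \<and> i < m \<longrightarrow> NN_C V adj e i \<noteq> Z"
  shows "int k \<le> m \<Longrightarrow> invk k"
proof (induction k)
  case 0 show ?case by (rule inv0)
next
  case (Suc k)
  have "NN_C V adj e (int k - 1) \<noteq> Z" using mf Suc.prems by auto
  moreover have "NN_C V adj e (int k - 1) = nnC V adj e k" unfolding NN_C_def by simp
  ultimately have "Z - nnC V adj e k \<noteq> 0" by simp
  then show ?case using invS Suc by simp
qed

lemma final_step:
  assumes I: "invk k"
    and zc: "zcoef V adj e x \<noteq> 0"
    and B: "B = supp V (Z - nnC V adj e k)"
    and mmn: "\<forall>v \<in> V - B. mm v \<ge> 0"
    and dec: "x = nnC V adj e k + (\<lambda>w. if w \<in> V - B then of_int (mm w) else 0)"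
  shows "\<forall>v \<in> V - B. mm v \<noteq> 0 \<longrightarrow> (\<forall>w \<in> B. \<not> adj v w)"
proof (intro ballI impI notI)
  fix v w assume v: "v \<in> V - B" and mv: "mm v \<noteq> 0" and w: "w \<in> B" and a: "adj v w"
  define Mf where "Mf = (\<lambda>w. if w \<in> V - B then (of_int (mm w) :: rat) else 0)"
  define N where "N = {n :: 'a \<Rightarrow> nat. (\<forall>v. v \<notin> V \<longrightarrow> n v = 0) \<and>
             (\<lambda>w. \<Sum>v\<in>V. of_nat (n v) * Estar V adj e v w) = x}"
  have "N \<noteq> {}"
  proof
    assume "N = {}"
    then have "zcoef V adj e x = 0" unfolding zcoef_def N_def[symmetric] by simp
    then show False using zc by simp
  qed
  then obtain n where n: "(\<lambda>w. \<Sum>v\<in>V. of_nat (n v) * Estar V adj e v w) = x" unfolding N_def by blast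
  have wV: "w \<in> V" using w B unfolding supp_def by auto
  have "ip x w = (\<Sum>u\<in>V. of_nat (n u) * ip (Estar V adj e u) w)"
    unfolding n[symmetric] by (rule form_sum_left)
  also have "\<dots> = (\<Sum>u\<in>V. if u = w then - of_nat (n w) else 0)"
    using Estar_prop(2)[OF wV] by (intro sum.cong refl) auto
  also have "\<dots> = - of_nat (n w)" using wV fin by simp
  finally have ipx: "ip x w \<le> 0" by simp
  have "ip x w = ip (nnC V adj e k) w + ip Mf w" unfolding dec Mf_def by (rule form_add_left)
  moreover have "ip (nnC V adj e k) w = 0" using I w B unfolding invk_def by auto
  moreover have "0 < ip Mf w"
  proof -
    have M0: "0 \<le> Mf" using mmn unfolding Mf_def le_fun_def by auto
    have Mw: "Mf w = 0" using w unfolding Mf_def by auto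
    have "Mf v * M v w \<le> ip Mf w" using ip_ge(2)[OF M0 Mw wV] v by auto
    moreover have "Mf v * M v w = of_int (mm v)" using v imat_adj[OF a] unfolding Mf_def by simp
    moreover have "0 < mm v" using mmn v mv by force
    ultimately show ?thesis by simp
  qed
  ultimately show False using ipx by simp
qed

end

theorem mainTheorem9:
  fixes V :: "'v set" and adj :: "'v \<Rightarrow> 'v \<Rightarrow> bool" and e :: "'v \<Rightarrow> int"
    and m j :: int and l :: "'v \<Rightarrow> rat" and mm :: "'v \<Rightarrow> int"
  assumes tree: "is_tree V adj"
    and negdef: "neg_definite V adj e"
    and ell: "elliptic V adj e"
    and m_ge: "m \<ge> -1"
    and m_def: "NN_C V adj e m = ZK V adj e"
    and m_first: "\<forall>i. -1 \<le> i \<and> i < m \<longrightarrow> NN_C V adj e i \<noteq> ZK V adj e"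
    and j_range: "-1 \<le> j" "j \<le> m - 1"
    and l_in: "l \<in> SuppP0_j V adj e j"
    and mm_nonneg: "\<forall>v \<in> V - NN_B V adj e (j + 1). mm v \<ge> 0"
    and decomp: "ZK V adj e - Eall V - l =
       NN_C V adj e j + (\<lambda>w. if w \<in> V - NN_B V adj e (j + 1) then of_int (mm w) else 0)"
  shows "\<forall>v \<in> V - NN_B V adj e (j + 1). mm v \<noteq> 0 \<longrightarrow>
           (\<forall>w \<in> NN_B V adj e (j + 1). \<not> adj v w)"
proof -
  interpret ellg V adj e
  proof
    show "finite V" using tree unfolding is_tree_def by auto
    show "\<And>u w. adj u w \<Longrightarrow> u \<in> V \<and> w \<in> V \<and> u \<noteq> w \<and> adj w u" using tree unfolding is_tree_def by auto
    show "\<And>u w. u \<in> V \<Longrightarrow> w \<in> V \<Longrightarrow> adj\<^sup>*\<^sup>* u w" using tree unfolding is_tree_def by auto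
    show "neg_definite V adj e" by (rule negdef)
    show "elliptic V adj e" by (rule ell)
  qed
  define k where "k = nat (j + 1)"
  have kj: "int k = j + 1" using j_range unfolding k_def by simp
  have I: "invk k" using invk_all[OF m_first] kj j_range by simp
  have NC: "NN_C V adj e j = nnC V adj e k" unfolding NN_C_def k_def by simp
  have NB: "NN_B V adj e (j + 1) = supp V (ZK V adj e - nnC V adj e k)"
    unfolding NN_B_def using j_range NC by simp
  have zc: "zcoef V adj e (ZK V adj e - Eall V - l) \<noteq> 0"
    using l_in unfolding SuppP0_j_def SuppP0_def wcoef_def by auto
  show ?thesis
    using final_step[OF I zc NB mm_nonneg] decomp unfolding NC by simp
qed


end
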